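(* Let $X$ be a non-separable complex Hilbert space. Then there exists a rigid operator $T:X\to X$ such that $\mathrm{St}(T)=\emptyset$.
   Context: For a continuous linear operator $T$ on $X$: $\mathfrak{C}$ is the set of strictly increasing sequences $\omega=(\omega_n)$ of positive integers such that $T^{\omega_n}x\to x$ for some $x\neq0$; $\mathfrak{L}(\omega)=\{x:T^{\omega_n}x\to x\}$; $\mathrm{Rec}(T)=\bigcup_{\omega\in\mathfrak{C}}\mathfrak{L}(\omega)$ together with $0$ (the recurrent vectors). $T$ is rigid if $\mathfrak{L}(\omega)=X$ for some $\omega\in\mathfrak{C}$. A sequence $\omega\in\mathfrak{C}$ is stationary if $\overline{\mathfrak{L}(\omega)}=\overline{\mathfrak{L}(\mu)}$ for every subsequence $\mu$ of $\omega$. $\mathrm{St}(T)$ is the set of $x\in\mathrm{Rec}(T)$ such that every $\omega\in\mathfrak{C}$ with $x\in\mathfrak{L}(\omega)$ is stationary. *)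

theory Defs
  imports "HOL-Analysis.Analysis"
begin

text \<open>A complex Hilbert space is such a space that is also complete.\<close>

class complex_inner = real_normed_vector +
  fixes scaleC :: "complex \<Rightarrow> 'a \<Rightarrow> 'a"
    and cinner :: "'a \<Rightarrow> 'a \<Rightarrow> complex"
  assumes scaleC_add_right: "scaleC a (x + y) = scaleC a x + scaleC a y"
    and scaleC_add_left: "scaleC (a + b) x = scaleC a x + scaleC b x"
    and scaleC_scaleC: "scaleC a (scaleC b x) = scaleC (a * b) x"
    and scaleC_one: "scaleC 1 x = x"
    and scaleC_of_real: "scaleC (complex_of_real r) x = scaleR r x"
    and cinner_commute: "cinner x y = cnj (cinner y x)"
    and cinner_add_right: "cinner x (y + z) = cinner x y + cinner x z"
    and cinner_scaleC_right: "cinner x (scaleC a y) = a * cinner x y"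
    and cinner_nonneg: "0 \<le> Re (cinner x x)"
    and cinner_eq_zero_iff: "cinner x x = 0 \<longleftrightarrow> x = 0"
    and norm_eq_sqrt_cinner: "norm x = sqrt (Re (cinner x x))"

definition bounded_clinear_op :: "('a::complex_inner \<Rightarrow> 'a) \<Rightarrow> bool" where
  "bounded_clinear_op T \<longleftrightarrow> bounded_linear T \<and> (\<forall>c x. T (scaleC c x) = scaleC c (T x))"

definition recC :: "('a::real_normed_vector \<Rightarrow> 'a) \<Rightarrow> (nat \<Rightarrow> nat) set" where
  "recC T = {\<omega>. strict_mono \<omega> \<and> (\<forall>n. 0 < \<omega> n) \<and>
                 (\<exists>x. x \<noteq> 0 \<and> (\<lambda>n. (T ^^ \<omega> n) x) \<longlonglongrightarrow> x)}"

definition recL :: "('a::real_normed_vector \<Rightarrow> 'a) \<Rightarrow> (nat \<Rightarrow> nat) \<Rightarrow> 'a set" where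
  "recL T \<omega> = {x. (\<lambda>n. (T ^^ \<omega> n) x) \<longlonglongrightarrow> x}"

definition Rec :: "('a::real_normed_vector \<Rightarrow> 'a) \<Rightarrow> 'a set" where
  "Rec T = (\<Union>\<omega>\<in>recC T. recL T \<omega>) \<union> {0}"

definition rigid :: "('a::real_normed_vector \<Rightarrow> 'a) \<Rightarrow> bool" where
  "rigid T \<longleftrightarrow> (\<exists>\<omega>\<in>recC T. recL T \<omega> = UNIV)"

definition stationary :: "('a::real_normed_vector \<Rightarrow> 'a) \<Rightarrow> (nat \<Rightarrow> nat) \<Rightarrow> bool" where
  "stationary T \<omega> \<longleftrightarrow> \<omega> \<in> recC T \<and>
     (\<forall>r. strict_mono r \<longrightarrow> closure (recL T \<omega>) = closure (recL T (\<omega> \<circ> r)))"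

definition St :: "('a::real_normed_vector \<Rightarrow> 'a) \<Rightarrow> 'a set" where
  "St T = {x \<in> Rec T. \<forall>\<omega>\<in>recC T. x \<in> recL T \<omega> \<longrightarrow> stationary T \<omega>}"

end

theory Submission
  imports Defs "HOL-Analysis.Analysis"
begin


lemma cnj_mult_self: "cnj z * z = complex_of_real ((cmod z)^2)"
  by (subst complex_norm_square) (rule mult.commute)

lemma cinner_add_left: "cinner (x + y) z = cinner x z + cinner (y::'a::complex_inner) z"
proof -
  have "cinner (x+y) z = cnj (cinner z (x+y))" by (rule cinner_commute)
  also have "\<dots> = cnj (cinner z x) + cnj (cinner z y)" by (simp add: cinner_add_right)
  also have "\<dots> = cinner x z + cinner y z" by (simp add: cinner_commute[of x z] cinner_commute[of y z])
  finally show ?thesis .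
qed

lemma cinner_scaleC_left: "cinner (scaleC a x) y = cnj a * cinner (x::'a::complex_inner) y"
proof -
  have "cinner (scaleC a x) y = cnj (cinner y (scaleC a x))" by (rule cinner_commute)
  also have "\<dots> = cnj a * cnj (cinner y x)" by (simp add: cinner_scaleC_right)
  also have "\<dots> = cnj a * cinner x y" by (simp add: cinner_commute[of x y])
  finally show ?thesis .
qed

lemma cinner_zero_right[simp]: "cinner (x::'a::complex_inner) 0 = 0"
  using cinner_add_right[of x 0 0] by simp

lemma cinner_zero_left[simp]: "cinner 0 (x::'a::complex_inner) = 0"
  using cinner_add_left[of 0 0 x] by simp

lemma cinner_minus_right: "cinner x (- y) = - cinner (x::'a::complex_inner) y"
  using cinner_add_right[of x y "-y"] by (simp add: add_eq_0_iff)

lemma cinner_minus_left: "cinner (- x) y = - cinner (x::'a::complex_inner) y"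
  using cinner_add_left[of x "-x" y] by (simp add: add_eq_0_iff)

lemma cinner_diff_right: "cinner x (y - z) = cinner x y - cinner (x::'a::complex_inner) z"
  by (simp only: diff_conv_add_uminus cinner_add_right cinner_minus_right)

lemma cinner_diff_left: "cinner (x - y) z = cinner x z - cinner (y::'a::complex_inner) z"
  by (simp only: diff_conv_add_uminus cinner_add_left cinner_minus_left)

lemma cinner_scaleR_right: "cinner x (scaleR r y) = of_real r * cinner (x::'a::complex_inner) y"
  by (metis cinner_scaleC_right scaleC_of_real)

lemma cinner_sum_right: "cinner x (sum f F) = (\<Sum>p\<in>F. cinner (x::'a::complex_inner) (f p))"
  by (induction F rule: infinite_finite_induct) (auto simp: cinner_add_right cinner_zero_right)

lemma cinner_sum_left: "cinner (sum f F) x = (\<Sum>p\<in>F. cinner (f p) (x::'a::complex_inner))"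
  by (induction F rule: infinite_finite_induct) (auto simp: cinner_add_left)

lemma cinner_self: "cinner x x = complex_of_real ((norm (x::'a::complex_inner))^2)"
proof -
  have "Im (cinner x x) = - Im (cinner x x)"
    using arg_cong[OF cinner_commute[of x x], of Im] by simp
  hence "Im (cinner x x) = 0" by simp
  moreover have "Re (cinner x x) = (norm x)^2"
    using norm_eq_sqrt_cinner[of x] cinner_nonneg[of x] by simp
  ultimately show ?thesis by (simp add: complex_eq_iff)
qed

lemma scaleC_zero_right[simp]: "scaleC a (0::'a::complex_inner) = 0"
  using scaleC_add_right[of a 0 0] by simp

lemma scaleC_zero_left[simp]: "scaleC 0 (x::'a::complex_inner) = 0"
  using scaleC_of_real[of 0 x] by simp

lemma scaleC_minus_right: "scaleC a (- x) = - scaleC a (x::'a::complex_inner)"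
  using scaleC_add_right[of a x "-x"] by (simp add: add_eq_0_iff)

lemma scaleC_diff_right: "scaleC a (x - y) = scaleC a x - scaleC a (y::'a::complex_inner)"
  by (simp only: diff_conv_add_uminus scaleC_add_right scaleC_minus_right)

lemma scaleC_minus_left: "scaleC (- a) x = - scaleC a (x::'a::complex_inner)"
  using scaleC_add_left[of a "-a" x] by (simp add: add_eq_0_iff)

lemma scaleC_diff_left: "scaleC (a - b) x = scaleC a x - scaleC b (x::'a::complex_inner)"
  by (simp only: diff_conv_add_uminus scaleC_add_left scaleC_minus_left)

lemma scaleC_scaleR: "scaleC a (scaleR r x) = scaleR r (scaleC a (x::'a::complex_inner))"
  by (metis scaleC_of_real scaleC_scaleC mult.commute)

lemma scaleC_sum_right: "scaleC a (sum f F) = (\<Sum>p\<in>F. scaleC a (f p::'a::complex_inner))"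
  by (induction F rule: infinite_finite_induct) (auto simp: scaleC_add_right)

lemma norm_scaleC: "norm (scaleC a x) = cmod a * norm (x::'a::complex_inner)"
proof -
  have "cinner (scaleC a x) (scaleC a x) = (a * cnj a) * cinner x x"
    by (simp add: cinner_scaleC_left cinner_scaleC_right mult.commute mult.left_commute)
  also have "a * cnj a = complex_of_real ((cmod a)^2)" by (metis complex_norm_square of_real_power)
  finally have "complex_of_real ((norm (scaleC a x))^2) = complex_of_real ((cmod a)^2 * (norm x)^2)"
    by (simp add: cinner_self)
  hence "(norm (scaleC a x))^2 = (cmod a * norm x)^2"
    by (simp only: of_real_eq_iff power_mult_distrib)
  thus ?thesis by (simp add: power2_eq_iff_nonneg)
qed

lemma pythag: "cinner x y = 0 \<Longrightarrow> (norm (x + y))^2 = (norm x)^2 + (norm (y::'a::complex_inner))^2"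
proof -
  assume h: "cinner x y = 0"
  hence h2: "cinner y x = 0" by (metis cinner_commute complex_cnj_zero)
  have "cinner (x+y) (x+y) = cinner x x + cinner y y"
    by (simp add: cinner_add_left cinner_add_right h h2)
  hence "complex_of_real ((norm (x+y))^2) = complex_of_real ((norm x)^2 + (norm y)^2)" by (simp add: cinner_self)
  thus ?thesis by (simp only: of_real_eq_iff)
qed

lemma cauchy_schwarz: "cmod (cinner x y) \<le> norm x * norm (y::'a::complex_inner)"
proof (cases "x = 0")
  case True thus ?thesis by simp
next
  case False
  hence nx: "norm x > 0" by simp
  define c where "c = cinner x y / cinner x x"
  define z where "z = y - scaleC c x"
  have xx: "cinner x x = of_real ((norm x)^2)" by (rule cinner_self)
  have "cinner x z = 0"
    using nx by (simp add: z_def cinner_diff_right cinner_scaleC_right c_def xx)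
  hence "cinner (scaleC c x) z = 0" by (simp add: cinner_scaleC_left)
  hence "(norm y)^2 = (norm (scaleC c x))^2 + (norm z)^2"
    using pythag[of "scaleC c x" z] by (simp add: z_def)
  hence "(norm (scaleC c x))^2 \<le> (norm y)^2" by simp
  hence "norm (scaleC c x) \<le> norm y" by (simp add: power2_le_iff_abs_le)
  hence "cmod c * norm x \<le> norm y" by (simp add: norm_scaleC)
  moreover have "cmod c = cmod (cinner x y) / (norm x)^2"
    by (simp add: c_def xx norm_divide norm_power)
  ultimately have "cmod (cinner x y) / (norm x)^2 * norm x \<le> norm y" by simp
  thus ?thesis using nx by (simp add: power2_eq_square field_simps)
qed

lemma bounded_linear_cinner_right: "bounded_linear (cinner (x::'a::complex_inner))"
  apply (rule bounded_linear_intro[where K="norm x"])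
    apply (simp add: cinner_add_right)
   apply (simp add: cinner_scaleR_right scaleR_conv_of_real)
  by (metis cauchy_schwarz mult.commute)

lemma bounded_linear_scaleC: "bounded_linear (scaleC c :: 'a::complex_inner \<Rightarrow> 'a)"
  apply (rule bounded_linear_intro[where K="cmod c"])
    apply (simp add: scaleC_add_right)
   apply (simp add: scaleC_scaleR)
  by (simp add: norm_scaleC mult.commute)


definition orthon :: "'i set \<Rightarrow> ('i \<Rightarrow> 'a::complex_inner) \<Rightarrow> bool" where
  "orthon D v \<longleftrightarrow> (\<forall>p\<in>D. \<forall>q\<in>D. cinner (v p) (v q) = (if p = q then 1 else 0))"

lemma norm_one_of_cinner: "cinner x x = 1 \<Longrightarrow> norm (x::'a::complex_inner) = 1"
  using norm_eq_sqrt_cinner[of x] by simp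

lemma orthon_coef_finite:
  assumes "orthon D v" "finite F" "F \<subseteq> D" "q \<in> D"
  shows "cinner (v q) (\<Sum>p\<in>F. scaleC (a p) (v p)) = (if q \<in> F then a q else 0)"
proof -
  have "cinner (v q) (\<Sum>p\<in>F. scaleC (a p) (v p)) = (\<Sum>p\<in>F. a p * cinner (v q) (v p))"
    by (simp add: cinner_sum_right cinner_scaleC_right)
  also have "\<dots> = (\<Sum>p\<in>F. if q = p then a p else 0)"
    by (rule sum.cong) (use assms in \<open>auto simp: orthon_def\<close>)
  also have "\<dots> = (if q \<in> F then a q else 0)" using assms(2) by simp
  finally show ?thesis .
qed

lemma orthon_norm_finite:
  assumes "orthon D v" "finite F" "F \<subseteq> D"
  shows "(norm (\<Sum>p\<in>F. scaleC (a p) (v p)))^2 = (\<Sum>p\<in>F. (cmod (a p))^2)"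
proof -
  define s where "s = (\<Sum>p\<in>F. scaleC (a p) (v p))"
  have "cinner s s = (\<Sum>p\<in>F. cnj (a p) * cinner (v p) s)"
    by (simp add: s_def[of] cinner_sum_left cinner_scaleC_left)
  also have "\<dots> = (\<Sum>p\<in>F. cnj (a p) * a p)"
    apply (rule sum.cong, simp)
    subgoal for p using orthon_coef_finite[OF assms(1,2,3), of p a] assms(3) by (auto simp: s_def)
    done
  also have "\<dots> = (\<Sum>p\<in>F. complex_of_real ((cmod (a p))^2))"
    by (rule sum.cong[OF refl]) (rule cnj_mult_self)
  finally have "complex_of_real ((norm s)^2) = complex_of_real (\<Sum>p\<in>F. (cmod (a p))^2)"
    by (simp add: cinner_self)
  thus ?thesis by (simp only: of_real_eq_iff s_def)
qed

lemma orthon_bessel_finite: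
  assumes "orthon D v" "finite F" "F \<subseteq> D"
  shows "(\<Sum>p\<in>F. (cmod (cinner (v p) x))^2) \<le> (norm x)^2"
proof -
  define s where "s = (\<Sum>p\<in>F. scaleC (cinner (v p) x) (v p))"
  have ns: "(norm s)^2 = (\<Sum>p\<in>F. (cmod (cinner (v p) x))^2)"
    unfolding s_def by (rule orthon_norm_finite[OF assms])
  have "cinner s x = (\<Sum>p\<in>F. cnj (cinner (v p) x) * cinner (v p) x)"
    by (simp add: s_def cinner_sum_left cinner_scaleC_left)
  also have "\<dots> = (\<Sum>p\<in>F. complex_of_real ((cmod (cinner (v p) x))^2))"
    by (rule sum.cong[OF refl]) (rule cnj_mult_self)
  also have "\<dots> = cinner s s" by (simp add: cinner_self ns)
  finally have "cinner s (x - s) = 0" by (simp add: cinner_diff_right)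
  hence "(norm (s + (x - s)))^2 = (norm s)^2 + (norm (x - s))^2" by (rule pythag)
  hence "(norm x)^2 = (norm s)^2 + (norm (x - s))^2" by simp
  thus ?thesis using ns by (metis le_add_same_cancel1 zero_le_power2)
qed

lemma summable_by_control:
  fixes f :: "'i \<Rightarrow> 'a::{real_normed_vector, complete_space}" and w :: "'i \<Rightarrow> real"
  assumes wsum: "w summable_on A" and wpos: "\<And>x. x \<in> A \<Longrightarrow> 0 \<le> w x"
    and ctrl: "\<And>H. finite H \<Longrightarrow> H \<subseteq> A \<Longrightarrow> (norm (sum f H))^2 \<le> sum w H"
  shows "f summable_on A"
proof -
  from wsum obtain L where lim: "(sum w \<longlongrightarrow> L) (finite_subsets_at_top A)"
    unfolding has_sum_def summable_on_def by blast
  have "\<exists>P. eventually P (finite_subsets_at_top A) \<and>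
              (\<forall>F F'. P F \<and> P F' \<longrightarrow> dist (sum f F) (sum f F') < e)" if "e>0" for e
  proof -
    define d P where "d = e^2/16" and "P F \<longleftrightarrow> finite F \<and> F \<subseteq> A \<and> dist (sum w F) L < d" for F
    have "d > 0" using that by (simp add: d_def)
    have ev_P: "eventually P (finite_subsets_at_top A)"
      using lim
      by (auto simp add: P_def[abs_def] \<open>0 < d\<close> eventually_conj_iff eventually_finite_subsets_at_top_weakI tendsto_iff)
    moreover have "dist (sum f F1) (sum f F2) < e" if "P F1" and "P F2" for F1 F2
    proof -
      from ev_P
      obtain F' where "finite F'" and "F' \<subseteq> A" and P_sup_F': "finite F \<and> F \<supseteq> F' \<and> F \<subseteq> A \<Longrightarrow> P F" for F
        by atomize_elim (simp add: eventually_finite_subsets_at_top)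
      define F where "F = F' \<union> F1 \<union> F2"
      have "finite F" and "F \<subseteq> A"
        using F_def P_def[abs_def] that \<open>finite F'\<close> \<open>F' \<subseteq> A\<close> by auto
      have dist_F: "dist (sum w F) L < d"
        by (metis F_def \<open>F \<subseteq> A\<close> P_def P_sup_F' \<open>finite F\<close> le_supE order_refl)
      have dist_F_subset: "dist (sum f F) (sum f F0) < e/2" if F0: "F0 \<subseteq> F" "P F0" for F0
      proof -
        have fin: "finite (F - F0)" "F - F0 \<subseteq> A" using \<open>finite F\<close> \<open>F \<subseteq> A\<close> by auto
        have "dist (sum f F) (sum f F0) = norm (sum f (F-F0))"
          unfolding dist_norm using \<open>finite F\<close> F0 by (subst sum_diff) auto
        moreover have "(norm (sum f (F-F0)))^2 \<le> sum w (F - F0)" by (rule ctrl[OF fin])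
        moreover have "sum w (F - F0) = sum w F - sum w F0"
          using \<open>finite F\<close> F0 by (subst sum_diff) auto
        moreover have "sum w F - sum w F0 < 2 * d"
          using dist_F F0 unfolding P_def dist_norm real_norm_def by linarith
        ultimately have "(norm (sum f (F-F0)))^2 < 2 * d" by linarith
        also have "2 * d < (e/2)^2" using \<open>e > 0\<close> unfolding d_def by (simp add: power2_eq_square)
        finally have "(norm (sum f (F-F0)))^2 < (e/2)^2" .
        hence "norm (sum f (F-F0)) < e/2"
          by (rule power2_less_imp_less) (use \<open>e>0\<close> in simp)
        thus ?thesis using \<open>dist (sum f F) (sum f F0) = norm (sum f (F-F0))\<close> by simp
      qed
      have "dist (sum f F1) (sum f F2) \<le> dist (sum f F) (sum f F1) + dist (sum f F) (sum f F2)"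
        by (rule dist_triangle3)
      also have "\<dots> < e/2 + e/2"
        by (intro add_strict_mono dist_F_subset that) (auto simp: F_def)
      finally show "dist (sum f F1) (sum f F2) < e" by simp
    qed
    ultimately show ?thesis by blast
  qed
  then have "cauchy_filter (filtermap (sum f) (finite_subsets_at_top A))"
    by (simp add: cauchy_filter_metric_filtermap)
  moreover have "complete (UNIV::'a set)"
    by (meson Cauchy_convergent UNIV_I complete_def convergent_def)
  ultimately obtain L' where "(sum f \<longlongrightarrow> L') (finite_subsets_at_top A)"
    using complete_uniform[where S=UNIV] by (force simp add: filterlim_def)
  then show ?thesis
    using summable_on_def has_sum_def by blast
qed

lemma orthon_summable:
  fixes v :: "'i \<Rightarrow> 'a::{complex_inner, complete_space}"
  assumes "orthon D v" "(\<lambda>p. (cmod (a p))^2) summable_on D"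
  shows "(\<lambda>p. scaleC (a p) (v p)) summable_on D"
  by (rule summable_by_control[OF assms(2)]) (auto simp: orthon_norm_finite[OF assms(1)])

lemma orthon_norm_le:
  fixes v :: "'i \<Rightarrow> 'a::{complex_inner, complete_space}"
  assumes "orthon D v" "(\<lambda>p. (cmod (a p))^2) summable_on D"
  shows "(norm (infsum (\<lambda>p. scaleC (a p) (v p)) D))^2 \<le> infsum (\<lambda>p. (cmod (a p))^2) D"
proof -
  have "((\<lambda>p. scaleC (a p) (v p)) has_sum infsum (\<lambda>p. scaleC (a p) (v p)) D) D"
    using orthon_summable[OF assms] by simp
  hence "(sum (\<lambda>p. scaleC (a p) (v p)) \<longlongrightarrow> infsum (\<lambda>p. scaleC (a p) (v p)) D) (finite_subsets_at_top D)"
    by (simp add: has_sum_def)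
  hence lim: "((\<lambda>H. (norm (sum (\<lambda>p. scaleC (a p) (v p)) H))^2) \<longlongrightarrow> (norm (infsum (\<lambda>p. scaleC (a p) (v p)) D))^2) (finite_subsets_at_top D)"
    by (intro tendsto_intros)
  have "eventually (\<lambda>H. (norm (sum (\<lambda>p. scaleC (a p) (v p)) H))^2 \<le> infsum (\<lambda>p. (cmod (a p))^2) D) (finite_subsets_at_top D)"
  proof (rule eventually_finite_subsets_at_top_weakI)
    fix H assume H: "finite H" "H \<subseteq> D"
    have "(norm (sum (\<lambda>p. scaleC (a p) (v p)) H))^2 = (\<Sum>p\<in>H. (cmod (a p))^2)"
      by (rule orthon_norm_finite[OF assms(1) H])
    also have "\<dots> \<le> infsum (\<lambda>p. (cmod (a p))^2) D"
      by (rule finite_sum_le_infsum[OF assms(2) H]) simp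
    finally show "(norm (sum (\<lambda>p. scaleC (a p) (v p)) H))^2 \<le> infsum (\<lambda>p. (cmod (a p))^2) D" .
  qed
  thus ?thesis using lim by (intro tendsto_upperbound) auto
qed

lemma orthon_coef:
  fixes v :: "'i \<Rightarrow> 'a::{complex_inner, complete_space}"
  assumes "orthon D v" "(\<lambda>p. (cmod (a p))^2) summable_on D" "q \<in> D"
  shows "cinner (v q) (infsum (\<lambda>p. scaleC (a p) (v p)) D) = a q"
proof -
  have "((\<lambda>p. scaleC (a p) (v p)) has_sum infsum (\<lambda>p. scaleC (a p) (v p)) D) D"
    using orthon_summable[OF assms(1,2)] by simp
  hence h1: "((\<lambda>p. cinner (v q) (scaleC (a p) (v p))) has_sum cinner (v q) (infsum (\<lambda>p. scaleC (a p) (v p)) D)) D"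
    by (rule has_sum_bounded_linear[OF bounded_linear_cinner_right])
  have h2: "((\<lambda>p. cinner (v q) (scaleC (a p) (v p))) has_sum a q) D"
    by (rule has_sum_finite_neutralI[where B="{q}"]) (use assms in \<open>auto simp: cinner_scaleC_right orthon_def\<close>)
  show ?thesis using has_sum_unique[OF h1 h2] .
qed

lemma orthon_bessel:
  assumes "orthon D v"
  shows "(\<lambda>p. (cmod (cinner (v p) x))^2) summable_on D"
    and "infsum (\<lambda>p. (cmod (cinner (v p) x))^2) D \<le> (norm x)^2"
proof -
  show s: "(\<lambda>p. (cmod (cinner (v p) x))^2) summable_on D"
    by (rule nonneg_bdd_above_summable_on) (auto intro!: bdd_aboveI[where M="(norm x)^2"] orthon_bessel_finite[OF assms])
  show "infsum (\<lambda>p. (cmod (cinner (v p) x))^2) D \<le> (norm x)^2"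
    by (rule infsum_le_finite_sums[OF s]) (rule orthon_bessel_finite[OF assms])
qed


lemma orthon_complete_has_sum:
  fixes v :: "'i \<Rightarrow> 'a::{complex_inner, complete_space}"
  assumes ov: "orthon D v" and compl: "\<And>y. (\<forall>q\<in>D. cinner (v q) y = 0) \<Longrightarrow> y = 0"
  shows "((\<lambda>p. scaleC (cinner (v p) x) (v p)) has_sum x) D"
proof -
  define S where "S = infsum (\<lambda>p. scaleC (cinner (v p) x) (v p)) D"
  have sq: "(\<lambda>p. (cmod (cinner (v p) x))^2) summable_on D" by (rule orthon_bessel(1)[OF ov])
  have sm: "(\<lambda>p. scaleC (cinner (v p) x) (v p)) summable_on D"
    by (rule orthon_summable[OF ov sq])
  have "\<forall>q\<in>D. cinner (v q) (x - S) = 0"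
    using orthon_coef[OF ov sq] by (simp add: S_def cinner_diff_right)
  hence "x - S = 0" by (rule compl)
  hence "x = S" by simp
  moreover have "((\<lambda>p. scaleC (cinner (v p) x) (v p)) has_sum S) D" unfolding S_def using sm by simp
  ultimately show ?thesis by simp
qed

lemma rat_complex_approx:
  assumes "d > 0"
  shows "\<exists>r. Re r \<in> \<rat> \<and> Im r \<in> \<rat> \<and> cmod (r - z) < d"
proof -
  obtain a where a: "a \<in> \<rat>" "Re z - d/2 < a" "a < Re z" using Rats_dense_in_real[of "Re z - d/2" "Re z"] assms by auto
  obtain b where b: "b \<in> \<rat>" "Im z - d/2 < b" "b < Im z" using Rats_dense_in_real[of "Im z - d/2" "Im z"] assms by auto
  have "cmod (Complex a b - z) \<le> \<bar>Re (Complex a b - z)\<bar> + \<bar>Im (Complex a b - z)\<bar>"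
    by (rule cmod_le)
  also have "\<dots> < d" using a b by simp
  finally show ?thesis using a b by (intro exI[of _ "Complex a b"]) simp
qed

lemma orthon_countable_separable:
  fixes v :: "'i \<Rightarrow> 'a::{complex_inner, complete_space}"
  assumes ov: "orthon D v" and cD: "countable D"
    and hs: "\<And>x. ((\<lambda>p. scaleC (cinner (v p) x) (v p)) has_sum x) D"
  shows "separable_space (euclidean :: 'a topology)"
proof -
  define Qc where "Qc = {z::complex. Re z \<in> \<rat> \<and> Im z \<in> \<rat>}"
  have cQc: "countable Qc"
  proof -
    have "Qc = (\<lambda>(a,b). Complex a b) ` (\<rat> \<times> \<rat>)"
      apply (auto simp: Qc_def image_iff) by (metis complex.collapse)
    thus ?thesis by (simp add: countable_rat)
  qed
  define C where "C = (\<Union>F\<in>{F. finite F \<and> F \<subseteq> D}. (\<lambda>r. \<Sum>p\<in>F. scaleC (r p) (v p)) ` (PiE F (\<lambda>_. Qc)))"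
  have cC: "countable C"
    unfolding C_def
    by (intro countable_UN countable_Collect_finite_subset cD countable_image countable_PiE) (auto simp: cQc)
  have dense: "x \<in> closure C" for x
  proof (unfold closure_approachable, intro allI impI)
    fix e :: real assume e: "e > 0"
    have "(sum (\<lambda>p. scaleC (cinner (v p) x) (v p)) \<longlongrightarrow> x) (finite_subsets_at_top D)"
      using hs[of x] by (simp add: has_sum_def)
    hence "eventually (\<lambda>F. dist (sum (\<lambda>p. scaleC (cinner (v p) x) (v p)) F) x < e/2) (finite_subsets_at_top D)"
      using e unfolding tendsto_iff by (metis half_gt_zero)
    then obtain F where F: "finite F" "F \<subseteq> D" "dist (sum (\<lambda>p. scaleC (cinner (v p) x) (v p)) F) x < e/2"
      by (auto simp: eventually_finite_subsets_at_top)
    define d where "d = e / (2 * (real (card F) + 1))"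
    have d: "d > 0" using e by (simp add: d_def)
    have "\<forall>p. \<exists>r. Re r \<in> \<rat> \<and> Im r \<in> \<rat> \<and> cmod (r - cinner (v p) x) < d"
      using rat_complex_approx[OF d] by blast
    then obtain r where r: "\<And>p. Re (r p) \<in> \<rat> \<and> Im (r p) \<in> \<rat> \<and> cmod (r p - cinner (v p) x) < d"
      by metis
    define r' where "r' = restrict r F"
    have r'P: "r' \<in> PiE F (\<lambda>_. Qc)" using r by (auto simp: r'_def Qc_def)
    define c where "c = (\<Sum>p\<in>F. scaleC (r' p) (v p))"
    have cC': "c \<in> C" unfolding C_def c_def using F r'P by blast
    have c_eq: "c = (\<Sum>p\<in>F. scaleC (r p) (v p))" unfolding c_def r'_def by (rule sum.cong) auto
    have "dist c (sum (\<lambda>p. scaleC (cinner (v p) x) (v p)) F) = norm (\<Sum>p\<in>F. scaleC (r p - cinner (v p) x) (v p))"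
      by (simp add: c_eq dist_norm sum_subtractf[symmetric] scaleC_diff_left)
    also have "\<dots> \<le> (\<Sum>p\<in>F. norm (scaleC (r p - cinner (v p) x) (v p)))" by (rule norm_sum)
    also have "\<dots> = (\<Sum>p\<in>F. cmod (r p - cinner (v p) x))"
    proof (rule sum.cong[OF refl])
      fix p assume "p \<in> F"
      hence "cinner (v p) (v p) = 1" using ov F(2) by (auto simp: orthon_def)
      hence "norm (v p) = 1" by (rule norm_one_of_cinner)
      thus "norm (scaleC (r p - cinner (v p) x) (v p)) = cmod (r p - cinner (v p) x)"
        by (simp add: norm_scaleC)
    qed
    also have "\<dots> \<le> (\<Sum>p\<in>F. d)" by (rule sum_mono) (use r in \<open>simp add: less_imp_le\<close>)
    also have "\<dots> = real (card F) * d" by simp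
    also have "\<dots> < e/2" using e by (simp add: d_def field_simps)
    finally have "dist c (sum (\<lambda>p. scaleC (cinner (v p) x) (v p)) F) < e/2" .
    hence "dist c x < e" using F(3) dist_triangle_half_l[of c _ e x] by (metis dist_commute)
    thus "\<exists>y\<in>C. dist y x < e" using cC' by blast
  qed
  show ?thesis unfolding separable_space_def
    by (intro exI[of _ C]) (use cC dense in auto)
qed

lemma uncountable_UNIV_nat_bool: "uncountable (UNIV :: (nat \<Rightarrow> bool) set)"
proof
  assume c: "countable (UNIV :: (nat \<Rightarrow> bool) set)"
  define f where "f = from_nat_into (UNIV :: (nat \<Rightarrow> bool) set)"
  have "range f = UNIV" using c by (simp add: f_def)
  then obtain n where "f n = (\<lambda>k. \<not> f k k)" by (metis UNIV_I imageE)
  hence "f n n = (\<not> f n n)" by (metis)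
  thus False by simp
qed


lemma exists_orthon_max:
  "\<exists>D (v::'i \<Rightarrow> 'a::complex_inner). orthon D v \<and> (D \<noteq> UNIV \<longrightarrow> (\<forall>y. (\<forall>q\<in>D. cinner (v q) y = 0) \<longrightarrow> y = 0))"
proof -
  define good where "good M \<longleftrightarrow> (\<forall>p y y'. (p,y)\<in>M \<longrightarrow> (p,y')\<in>M \<longrightarrow> y = y') \<and>
      (\<forall>p y q z. (p,y)\<in>M \<longrightarrow> (q,z)\<in>M \<longrightarrow> cinner y z = (if p = q then 1 else 0))" for M :: "('i \<times> 'a) set"
  define A where "A = {M. good M}"
  have "\<forall>C\<in>chains A. \<Union>C \<in> A"
  proof
    fix C assume C: "C \<in> chains A"
    have two: "\<exists>M\<in>C. a \<in> M \<and> b \<in> M" if "a \<in> \<Union>C" "b \<in> \<Union>C" for a b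
    proof -
      from that obtain M1 M2 where "M1 \<in> C" "M2 \<in> C" "a \<in> M1" "b \<in> M2" by blast
      thus ?thesis using chainsD[OF C, of M1 M2] by blast
    qed
    have CA: "M \<in> C \<Longrightarrow> good M" for M using C by (auto simp: chains_def A_def)
    show "\<Union>C \<in> A" unfolding A_def mem_Collect_eq good_def
    proof (intro conjI allI impI)
      fix p y y' assume "(p,y) \<in> \<Union>C" "(p,y') \<in> \<Union>C"
      then obtain M where "M \<in> C" "(p,y) \<in> M" "(p,y') \<in> M" using two by blast
      thus "y = y'" using CA[of M] by (auto simp: good_def)
    next
      fix p y q z assume "(p,y) \<in> \<Union>C" "(q,z) \<in> \<Union>C"
      then obtain M where "M \<in> C" "(p,y) \<in> M" "(q,z) \<in> M" using two by blast
      thus "cinner y z = (if p = q then 1 else 0)" using CA[of M] unfolding good_def by blast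
    qed
  qed
  from Zorn_Lemma[OF this] obtain M where MA: "M \<in> A" and Mmax: "\<And>X. X \<in> A \<Longrightarrow> M \<subseteq> X \<Longrightarrow> X = M"
    by blast
  have gM: "good M" using MA by (simp add: A_def)
  define D where "D = fst ` M"
  define v where "v p = (SOME y. (p,y) \<in> M)" for p
  have vM: "(p, v p) \<in> M" if "p \<in> D" for p
  proof -
    from that obtain y where "(p,y) \<in> M" by (auto simp: D_def)
    thus ?thesis unfolding v_def by (rule someI)
  qed
  have vuniq: "z = v q" if "(q,z) \<in> M" for q z
  proof -
    have "q \<in> D" using that by (force simp: D_def)
    thus ?thesis using vM[of q] that gM by (auto simp: good_def)
  qed
  have ov: "orthon D v" unfolding orthon_def
  proof (intro ballI)
    fix p q assume "p \<in> D" "q \<in> D"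
    thus "cinner (v p) (v q) = (if p = q then 1 else 0)" using vM gM unfolding good_def by blast
  qed
  have "(\<forall>y. (\<forall>q\<in>D. cinner (v q) y = 0) \<longrightarrow> y = 0)" if "D \<noteq> UNIV"
  proof (intro allI impI, rule ccontr)
    fix y assume orth: "\<forall>q\<in>D. cinner (v q) y = 0" and y0: "y \<noteq> 0"
    from that obtain p0 where p0: "p0 \<notin> D" by blast
    define u where "u = scaleC (complex_of_real (1 / norm y)) y"
    have uu: "cinner u u = 1"
    proof -
      have "cinner u u = cnj (complex_of_real (1 / norm y)) * complex_of_real (1 / norm y) * cinner y y"
        by (simp add: u_def cinner_scaleC_left cinner_scaleC_right)
      also have "\<dots> = complex_of_real ((1 / norm y) * (1 / norm y) * (norm y)^2)"
        by (simp add: cinner_self)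
      also have "(1 / norm y) * (1 / norm y) * (norm y)^2 = 1" using y0 by (simp add: power2_eq_square)
      finally show ?thesis by simp
    qed
    have uq: "cinner u (v q) = 0" if "q \<in> D" for q
    proof -
      have "cinner y (v q) = 0" using orth that by (metis cinner_commute complex_cnj_zero)
      thus ?thesis by (simp add: u_def cinner_scaleC_left)
    qed
    have qu: "cinner (v q) u = 0" if "q \<in> D" for q
      using uq[OF that] by (metis cinner_commute complex_cnj_zero)
    define M' where "M' = insert (p0, u) M"
    have p0M: "(p0, z) \<notin> M" for z using p0 by (force simp: D_def)
    have qD: "(q, z) \<in> M \<Longrightarrow> q \<in> D" for q z by (force simp: D_def)
    have "good M'" unfolding good_def M'_def
    proof (intro conjI allI impI)
      fix p y1 y2 assume "(p,y1) \<in> insert (p0,u) M" "(p,y2) \<in> insert (p0,u) M"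
      thus "y1 = y2" using p0M gM by (auto simp: good_def)
    next
      fix p y1 q z assume a1: "(p,y1) \<in> insert (p0,u) M" and a2: "(q,z) \<in> insert (p0,u) M"
      show "cinner y1 z = (if p = q then 1 else 0)"
      proof (cases "(p,y1) = (p0,u)")
        case True
        show ?thesis
        proof (cases "(q,z) = (p0,u)")
          case True thus ?thesis using \<open>(p,y1) = (p0,u)\<close> uu by simp
        next
          case False
          hence "(q,z) \<in> M" using a2 by blast
          hence "q \<in> D" "z = v q" using qD vuniq by auto
          thus ?thesis using True uq p0 by auto
        qed
      next
        case False
        hence pM: "(p,y1) \<in> M" using a1 by blast
        hence "p \<in> D" "y1 = v p" using qD vuniq by auto
        show ?thesis
        proof (cases "(q,z) = (p0,u)")
          case True thus ?thesis using \<open>p \<in> D\<close> \<open>y1 = v p\<close> qu p0 by auto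
        next
          case False
          hence "(q,z) \<in> M" using a2 by blast
          thus ?thesis using pM gM by (auto simp: good_def)
        qed
      qed
    qed
    hence "M' \<in> A" by (simp add: A_def)
    moreover have "M \<subseteq> M'" by (auto simp: M'_def)
    ultimately have "M' = M" by (rule Mmax)
    hence "(p0, u) \<in> M" by (auto simp: M'_def)
    thus False using p0M by blast
  qed
  thus ?thesis using ov by blast
qed

lemma exists_uncountable_orthon:
  assumes ns: "\<not> separable_space (euclidean :: ('a::{complex_inner, complete_space}) topology)"
  shows "\<exists>D (v::(nat \<Rightarrow> bool) \<Rightarrow> 'a). orthon D v \<and> uncountable D"
proof -
  obtain D and v :: "(nat \<Rightarrow> bool) \<Rightarrow> 'a" where ov: "orthon D v"
    and mx: "D \<noteq> UNIV \<Longrightarrow> (\<forall>y. (\<forall>q\<in>D. cinner (v q) y = 0) \<longrightarrow> y = 0)"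
    using exists_orthon_max by blast
  have "uncountable D"
  proof
    assume cD: "countable D"
    hence "D \<noteq> UNIV" using uncountable_UNIV_nat_bool by auto
    hence "\<And>x. ((\<lambda>p. scaleC (cinner (v p) x) (v p)) has_sum x) D"
      using mx by (intro orthon_complete_has_sum[OF ov]) auto
    hence "separable_space (euclidean :: 'a topology)"
      by (rule orthon_countable_separable[OF ov cD])
    thus False using ns by simp
  qed
  thus ?thesis using ov by blast
qed


definition theta :: "nat set \<Rightarrow> real" where
  "theta A = infsum (\<lambda>j. (1/2::real)^(j^2)) A"

definition lam :: "nat set \<Rightarrow> complex" where
  "lam A = cis (2 * pi * theta A)"

lemma half_pow_sq_le: "(1/2::real)^(j^2) \<le> (1/2)^j"
  by (rule power_decreasing) (auto simp: power2_eq_square)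

lemma finite_geom_le2: "finite F \<Longrightarrow> (\<Sum>j\<in>F. (1/2::real)^j) \<le> 2"
  using geometric_sum_less[of "1/2::real" F] by simp

lemma summable_half_sq: "(\<lambda>j. (1/2::real)^(j^2)) summable_on A"
proof (rule nonneg_bdd_above_summable_on)
  show "bdd_above (sum (\<lambda>j. (1/2::real)^(j^2)) ` {F. F \<subseteq> A \<and> finite F})"
  proof (rule bdd_aboveI[where M=2], clarify)
    fix F assume "F \<subseteq> A" "finite F"
    have "(\<Sum>j\<in>F. (1/2::real)^(j^2)) \<le> (\<Sum>j\<in>F. (1/2)^j)" by (rule sum_mono) (rule half_pow_sq_le)
    also have "\<dots> \<le> 2" using \<open>finite F\<close> by (rule finite_geom_le2)
    finally show "(\<Sum>j\<in>F. (1/2::real)^(j^2)) \<le> 2" .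
  qed
qed simp

lemma tail_bound:
  "infsum (\<lambda>j. (1/2::real)^(j^2)) (A \<inter> {a<..}) \<le> 2^(a+2) * (1/2)^((a+1)^2)"
proof (rule infsum_le_finite_sums[OF summable_half_sq])
  fix F assume F: "finite F" "F \<subseteq> A \<inter> {a<..}"
  have "(\<Sum>j\<in>F. (1/2::real)^(j^2)) \<le> (\<Sum>j\<in>F. 2^(a+1) * (1/2)^((a+1)^2) * (1/2)^j)"
  proof (rule sum_mono)
    fix j assume "j \<in> F"
    hence ja: "j \<ge> a + 1" using F by auto
    have "(a+1)^2 + (j - (a+1)) \<le> j^2"
    proof -
      obtain d where jd: "j = a + 1 + d" using ja le_Suc_ex by blast
      have "j^2 = (a+1)^2 + 2*(a+1)*d + d^2" unfolding jd by (simp add: power2_eq_square algebra_simps)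
      moreover have "d \<le> 2*(a+1)*d" by simp
      ultimately show ?thesis using jd by simp
    qed
    hence "(1/2::real)^(j^2) \<le> (1/2)^((a+1)^2 + (j - (a+1)))" by (rule power_decreasing) auto
    also have "\<dots> = (1/2)^((a+1)^2) * (1/2)^(j - (a+1))" by (simp add: power_add)
    also have "(1/2::real)^(j - (a+1)) = 2^(a+1) * (1/2)^j"
    proof -
      have h1: "(1/2::real)^(j - (a+1)) * (1/2)^(a+1) = (1/2)^j"
        using ja by (simp only: power_add[symmetric] le_add_diff_inverse2)
      have h2: "(1/2::real)^(a+1) * 2^(a+1) = 1" by (simp only: power_mult_distrib[symmetric]) simp
      show ?thesis by (metis h1 h2 mult.assoc mult_1_right mult.commute)
    qed
    finally show "(1/2::real)^(j^2) \<le> 2^(a+1) * (1/2)^((a+1)^2) * (1/2)^j" by (simp add: mult_ac)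
  qed
  also have "\<dots> = 2^(a+1) * (1/2)^((a+1)^2) * (\<Sum>j\<in>F. (1/2)^j)" by (simp add: sum_distrib_left)
  also have "\<dots> \<le> 2^(a+1) * (1/2)^((a+1)^2) * 2" by (rule mult_left_mono) (use F finite_geom_le2 in auto)
  also have "\<dots> = 2^(a+2) * (1/2)^((a+1)^2)" by simp
  finally show "(\<Sum>j\<in>F. (1/2::real)^(j^2)) \<le> 2^(a+2) * (1/2)^((a+1)^2)" .
qed

lemma theta_split:
  assumes small: "\<And>j. j < a \<Longrightarrow> j^2 \<le> K"
  shows "\<exists>I\<in>\<int>. \<exists>R. 2^K * theta A = I + (if a \<in> A then 2^K * (1/2)^(a^2) else 0) + R
            \<and> 0 \<le> R \<and> R \<le> 2^K * (2^(a+2) * (1/2)^((a+1)^2))"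
proof -
  let ?f = "\<lambda>j. (1/2::real)^(j^2)"
  have A_eq: "A = (A \<inter> {..<a}) \<union> ((A \<inter> {a}) \<union> (A \<inter> {a<..}))" by auto
  have "theta A = infsum ?f (A \<inter> {..<a}) + (infsum ?f (A \<inter> {a}) + infsum ?f (A \<inter> {a<..}))"
    unfolding theta_def
    apply (subst A_eq)
    apply (subst infsum_Un_disjoint)
       apply (rule summable_half_sq)+
      apply (auto intro!: summable_on_Un_disjoint summable_half_sq)[2]
    apply (subst infsum_Un_disjoint)
       apply (auto intro!: summable_half_sq)
    done
  moreover have "infsum ?f (A \<inter> {a}) = (if a \<in> A then (1/2)^(a^2) else 0)" by auto
  moreover have "infsum ?f (A \<inter> {..<a}) = (\<Sum>j\<in>A \<inter> {..<a}. ?f j)" by simp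
  ultimately have th: "theta A = (\<Sum>j\<in>A \<inter> {..<a}. ?f j) + (if a \<in> A then (1/2)^(a^2) else 0) + infsum ?f (A \<inter> {a<..})"
    by simp
  define I where "I = 2^K * (\<Sum>j\<in>A \<inter> {..<a}. ?f j)"
  define R where "R = 2^K * infsum ?f (A \<inter> {a<..})"
  have "I = (\<Sum>j\<in>A \<inter> {..<a}. 2^(K - j^2))"
    unfolding I_def sum_distrib_left
  proof (rule sum.cong[OF refl])
    fix j assume "j \<in> A \<inter> {..<a}"
    hence "j^2 \<le> K" using small by auto
    hence "(2::real)^K = 2^(K - j^2) * 2^(j^2)" by (simp add: power_add[symmetric])
    thus "2^K * (1/2::real)^(j^2) = 2^(K - j^2)" by (simp add: power_one_over)
  qed
  hence "I \<in> \<int>" by (simp add: Ints_sum)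
  moreover have "2^K * theta A = I + (if a \<in> A then 2^K * (1/2)^(a^2) else 0) + R"
    by (simp add: th I_def R_def algebra_simps)
  moreover have "0 \<le> R" unfolding R_def by (intro mult_nonneg_nonneg infsum_nonneg) auto
  moreover have "R \<le> 2^K * (2^(a+2) * (1/2)^((a+1)^2))"
    unfolding R_def by (rule mult_left_mono[OF tail_bound]) simp
  ultimately show ?thesis by blast
qed

lemma lam_pow: "lam A ^ (2^K) = cis (2 * pi * (2^K * theta A))"
proof -
  have "lam A ^ (2^K) = cis (real (2^K) * (2*pi*theta A))" unfolding lam_def by (simp add: Complex.DeMoivre)
  also have "\<dots> = cis (2 * pi * (2^K * theta A))" by (simp add: mult_ac)
  finally show ?thesis .
qed

lemma cis_int_shift: "I \<in> \<int> \<Longrightarrow> cis (2 * pi * (I + x)) = cis (2 * pi * x)"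
proof -
  assume "I \<in> \<int>"
  hence "cis (2 * pi * I) = 1" by simp
  thus ?thesis by (simp add: distrib_left cis_mult[symmetric])
qed

lemma bound_tends_zero:
  assumes "filterlim a at_top sequentially" "\<And>n. K n \<le> (a n)^2"
  shows "(\<lambda>n. (2::real)^(K n) * (2^(a n + 2) * (1/2)^((a n + 1)^2))) \<longlonglongrightarrow> 0"
proof -
  have le: "(2::real)^(K n) * (2^(a n + 2) * (1/2)^((a n + 1)^2)) \<le> 2 * (1/2)^(a n)" for n
  proof -
    let ?a = "a n"
    have "(2::real)^(K n) \<le> 2^(?a^2)" using assms(2) by (rule power_increasing) simp
    hence "(2::real)^(K n) * (2^(?a + 2) * (1/2)^((?a + 1)^2)) \<le> 2^(?a^2) * (2^(?a + 2) * (1/2)^((?a + 1)^2))"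
      by (rule mult_right_mono) simp
    also have "\<dots> = 2 * (1/2)^?a"
    proof -
      have e: "(?a+1)^2 + 1 = (?a^2 + (?a+2)) + ?a" by (simp add: power2_eq_square)
      have "(1/2::real)^((?a+1)^2 + 1) = (1/2)^((?a^2 + (?a+2)) + ?a)" by (simp only: e)
      hence "(1/2::real)^((?a+1)^2) * (1/2) = (1/2)^(?a^2 + (?a+2)) * (1/2)^?a"
        by (simp only: power_add power_one_right)
      hence h: "(1/2::real)^((?a+1)^2) = 2 * ((1/2)^(?a^2 + (?a+2)) * (1/2)^?a)" by (simp add: field_simps)
      have h2: "(2::real)^(?a^2 + (?a+2)) * (1/2)^(?a^2 + (?a+2)) = 1"
        by (simp add: power_mult_distrib[symmetric])
      have "(2::real)^(?a^2) * (2^(?a + 2) * (1/2)^((?a + 1)^2)) = 2 * ((2^(?a^2 + (?a+2)) * (1/2)^(?a^2 + (?a+2))) * (1/2)^?a)"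
        by (simp only: h power_add mult_ac)
      also have "\<dots> = 2 * (1/2)^?a" by (simp only: h2 mult_1_left)
      finally show ?thesis .
    qed
    finally show ?thesis .
  qed
  have "(\<lambda>n. (1/2::real)^(a n)) \<longlonglongrightarrow> 0"
    using filterlim_compose[OF LIMSEQ_power_zero[of "1/2::real"] assms(1)] by simp
  hence "(\<lambda>n. 2 * (1/2::real)^(a n)) \<longlonglongrightarrow> 0" using tendsto_mult_right_zero by blast
  show ?thesis
  proof (rule tendsto_sandwich[where f="\<lambda>_. 0" and h="\<lambda>n. 2 * (1/2::real)^(a n)"])
    show "\<forall>\<^sub>F n in sequentially. (0::real) \<le> 2^(K n) * (2^(a n + 2) * (1/2)^((a n + 1)^2))"
      by (intro always_eventually allI) simp
    show "\<forall>\<^sub>F n in sequentially. (2::real)^(K n) * (2^(a n + 2) * (1/2)^((a n + 1)^2)) \<le> 2 * (1/2)^(a n)"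
      by (intro always_eventually allI le)
  qed (use \<open>(\<lambda>n. 2 * (1/2::real)^(a n)) \<longlonglongrightarrow> 0\<close> in auto)
qed

lemma cis_limit_form:
  assumes "\<forall>\<^sub>F n in sequentially. z n = c * cis (2 * pi * r n)" "r \<longlonglongrightarrow> 0"
  shows "z \<longlonglongrightarrow> c"
proof -
  have "(\<lambda>n. c * cis (2 * pi * r n)) \<longlonglongrightarrow> c * cis (2 * pi * 0)"
    by (intro tendsto_intros assms(2))
  hence "(\<lambda>n. c * cis (2 * pi * r n)) \<longlonglongrightarrow> c" by simp
  moreover have "\<forall>\<^sub>F n in sequentially. c * cis (2 * pi * r n) = z n"
    using assms(1) by (rule eventually_mono) simp
  ultimately show ?thesis by (rule Lim_transform_eventually)
qed

lemma lam_limit: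
  assumes lim: "filterlim a at_top sequentially" and small: "\<And>n j. j < a n \<Longrightarrow> j^2 \<le> K n"
    and Kle: "\<And>n. K n \<le> (a n)^2"
    and c: "\<forall>\<^sub>F n in sequentially. cis (2 * pi * (if a n \<in> A then 2^(K n) * (1/2)^((a n)^2) else 0)) = c"
  shows "(\<lambda>n. lam A ^ (2^(K n))) \<longlonglongrightarrow> c"
proof -
  have "\<exists>R. \<exists>I\<in>\<int>. 2^(K n) * theta A = I + (if a n \<in> A then 2^(K n) * (1/2)^((a n)^2) else 0) + R
            \<and> 0 \<le> R \<and> R \<le> 2^(K n) * (2^(a n + 2) * (1/2)^((a n + 1)^2))" for n
    using theta_split[of "a n" "K n" A] small by blast
  then obtain R where R: "\<And>n. \<exists>I\<in>\<int>. 2^(K n) * theta A = I + (if a n \<in> A then 2^(K n) * (1/2)^((a n)^2) else 0) + R n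
            \<and> 0 \<le> R n \<and> R n \<le> 2^(K n) * (2^(a n + 2) * (1/2)^((a n + 1)^2))"
    by metis
  have R0: "R \<longlonglongrightarrow> 0"
  proof (rule tendsto_sandwich[where f="\<lambda>_. 0" and h="\<lambda>n. 2^(K n) * (2^(a n + 2) * (1/2::real)^((a n + 1)^2))"])
    show "\<forall>\<^sub>F n in sequentially. (0::real) \<le> R n" using R by (intro always_eventually allI) blast
    show "\<forall>\<^sub>F n in sequentially. R n \<le> 2^(K n) * (2^(a n + 2) * (1/2::real)^((a n + 1)^2))"
      using R by (intro always_eventually allI) blast
  qed (use bound_tends_zero[OF lim Kle] in auto)
  show ?thesis
  proof (rule cis_limit_form[OF _ R0])
    show "\<forall>\<^sub>F n in sequentially. lam A ^ 2 ^ K n = c * cis (2 * pi * R n)"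
      using c
    proof (rule eventually_mono)
      fix n assume cn: "cis (2 * pi * (if a n \<in> A then 2^(K n) * (1/2)^((a n)^2) else 0)) = c"
      from R[of n] obtain I where I: "I \<in> \<int>" and eq: "2^(K n) * theta A = I + ((if a n \<in> A then 2^(K n) * (1/2)^((a n)^2) else 0) + R n)"
        by (auto simp: add.assoc)
      have "lam A ^ 2 ^ K n = cis (2 * pi * ((if a n \<in> A then 2^(K n) * (1/2)^((a n)^2) else 0) + R n))"
        unfolding lam_pow eq by (rule cis_int_shift[OF I])
      also have "\<dots> = c * cis (2 * pi * R n)" by (simp add: distrib_left cis_mult[symmetric] cn)
      finally show "lam A ^ 2 ^ K n = c * cis (2 * pi * R n)" .
    qed
  qed
qed


definition pre :: "(nat \<Rightarrow> bool) \<Rightarrow> nat \<Rightarrow> bool list" where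
  "pre f n = map f [0..<n]"

definition Aset :: "(nat \<Rightarrow> bool) \<Rightarrow> nat set" where
  "Aset f = range (\<lambda>n. to_nat (pre f n))"

definition aseq :: "(nat \<Rightarrow> bool) \<Rightarrow> nat \<Rightarrow> nat" where
  "aseq g m = enumerate (Aset g) (Suc m)"

definition omega :: "(nat \<Rightarrow> bool) \<Rightarrow> nat \<Rightarrow> nat" where
  "omega g n = 2 ^ ((aseq g (n div 2))^2 - (if even n then 1 else 0))"

definition rho :: "nat \<Rightarrow> nat" where
  "rho n = 2 ^ ((Suc n)^2)"

lemma pre_code_eq:
  assumes "to_nat (pre f n) = to_nat (pre g m)"
  shows "n = m" "\<And>j. j < n \<Longrightarrow> f j = g j"
proof -
  have e: "pre f n = pre g m" using assms by simp
  hence "length (pre f n) = length (pre g m)" by simp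
  thus nm: "n = m" by (simp add: pre_def)
  fix j assume "j < n"
  have "pre f n ! j = pre g m ! j" using e by simp
  thus "f j = g j" using \<open>j < n\<close> nm by (simp add: pre_def)
qed

lemma infinite_Aset: "infinite (Aset f)"
proof -
  have "inj (\<lambda>n. to_nat (pre f n))" by (rule injI) (rule pre_code_eq(1))
  thus ?thesis unfolding Aset_def by (rule range_inj_infinite)
qed

lemma finite_Aset_Int:
  assumes "f \<noteq> g" shows "finite (Aset f \<inter> Aset g)"
proof -
  obtain i where i: "f i \<noteq> g i" using assms by blast
  have "Aset f \<inter> Aset g \<subseteq> (\<lambda>n. to_nat (pre f n)) ` {..i}"
  proof
    fix x assume "x \<in> Aset f \<inter> Aset g"
    hence "x \<in> Aset f" "x \<in> Aset g" by auto
    then obtain n m where x: "x = to_nat (pre f n)" "x = to_nat (pre g m)" unfolding Aset_def by blast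
    have "n \<le> i"
    proof (rule ccontr)
      assume "\<not> n \<le> i"
      hence "i < n" by simp
      hence "f i = g i" using pre_code_eq(2)[of f n g m i] x by simp
      thus False using i by simp
    qed
    thus "x \<in> (\<lambda>n. to_nat (pre f n)) ` {..i}" using x by auto
  qed
  thus ?thesis by (rule finite_subset) simp
qed

lemma aseq_mono: "strict_mono (aseq g)"
  unfolding strict_mono_def aseq_def using infinite_Aset by (simp add: enumerate_mono)

lemma aseq_in: "aseq g m \<in> Aset g"
  unfolding aseq_def using infinite_Aset by (rule enumerate_in_set)

lemma aseq_pos: "aseq g m \<ge> 1"
proof -
  have "enumerate (Aset g) 0 < enumerate (Aset g) (Suc m)" using infinite_Aset by (simp add: enumerate_mono)
  thus ?thesis by (simp add: aseq_def)
qed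

lemma aseq_lim: "filterlim (aseq g) at_top sequentially"
  by (rule filterlim_subseq[OF aseq_mono])

lemma aseq_notin:
  assumes "f \<noteq> g" shows "\<forall>\<^sub>F m in sequentially. aseq g m \<notin> Aset f"
proof -
  define N where "N = Max (Aset f \<inter> Aset g)"
  have fin: "finite (Aset f \<inter> Aset g)" using finite_Aset_Int[OF assms] .
  have "aseq g m \<notin> Aset f" if "m \<ge> Suc N" for m
  proof
    assume "aseq g m \<in> Aset f"
    hence "aseq g m \<in> Aset f \<inter> Aset g" using aseq_in by blast
    hence "aseq g m \<le> N" unfolding N_def using fin by simp
    moreover have "aseq g m \<ge> m" by (rule strict_mono_imp_increasing[OF aseq_mono])
    ultimately show False using that by simp
  qed
  thus ?thesis by (simp add: eventually_sequentially) blast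
qed

lemma omega_pos: "omega g n > 0" by (simp add: omega_def)

lemma omega_mono: "strict_mono (omega g)"
proof (rule strict_monoI_Suc)
  fix n
  show "omega g n < omega g (Suc n)"
  proof (cases "even n")
    case True
    hence "Suc n div 2 = n div 2" by presburger
    moreover have "aseq g (n div 2)^2 \<ge> 1" using aseq_pos[of g "n div 2"] by simp
    ultimately show ?thesis using True by (simp add: omega_def)
  next
    case False
    hence sd: "Suc n div 2 = Suc (n div 2)" by presburger
    have "aseq g (n div 2) < aseq g (Suc (n div 2))" using aseq_mono by (simp add: strict_mono_def)
    hence "aseq g (n div 2)^2 < aseq g (Suc (n div 2))^2 - 1"
    proof -
      assume lt: "aseq g (n div 2) < aseq g (Suc (n div 2))"
      let ?x = "aseq g (n div 2)" and ?y = "aseq g (Suc (n div 2))"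
      have "?x + 1 \<le> ?y" using lt by simp
      hence "(?x+1)^2 \<le> ?y^2" by (rule power_mono) simp
      moreover have "?x^2 + 2 \<le> (?x+1)^2" using aseq_pos[of g "n div 2"] by (simp add: power2_eq_square)
      ultimately show ?thesis by arith
    qed
    thus ?thesis using False sd by (simp add: omega_def)
  qed
qed

lemma rho_mono: "strict_mono rho"
  unfolding rho_def by (rule strict_monoI_Suc) (rule power_strict_increasing, simp add: power2_eq_square, simp)

lemma two_pow_half_pow: "(2::real)^n * (1/2)^n = 1"
  by (simp add: power_mult_distrib[symmetric])

lemma lam_rho: "(\<lambda>n. lam (Aset f) ^ rho n) \<longlonglongrightarrow> 1"
  unfolding rho_def
proof (rule lam_limit[where a="\<lambda>n. Suc n"])
  show "filterlim Suc at_top sequentially" by (rule filterlim_subseq) (simp add: strict_mono_def)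
  show "j\<^sup>2 \<le> (Suc n)\<^sup>2" if "j < Suc n" for j n using that by (simp add: power_mono)
qed (auto simp: two_pow_half_pow)

lemma lam_omega_odd: "(\<lambda>m. lam (Aset f) ^ omega g (2*m+1)) \<longlonglongrightarrow> 1"
proof -
  have "omega g (2*m+1) = 2^((aseq g m)^2)" for m by (simp add: omega_def)
  moreover have "(\<lambda>m. lam (Aset f) ^ 2^((aseq g m)^2)) \<longlonglongrightarrow> 1"
  proof (rule lam_limit[where a="aseq g"])
    show "filterlim (aseq g) at_top sequentially" by (rule aseq_lim)
    show "j\<^sup>2 \<le> (aseq g n)\<^sup>2" if "j < aseq g n" for j n using that by (simp add: power_mono)
  qed (auto simp: two_pow_half_pow)
  ultimately show ?thesis by simp
qed

lemma sq_minus_one: "j < a \<Longrightarrow> j^2 \<le> a^2 - (1::nat)"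
proof -
  assume "j < a"
  hence "j^2 < a^2" by (simp add: power_strict_mono)
  thus ?thesis by simp
qed

lemma lam_omega_even_ne:
  assumes "f \<noteq> g" shows "(\<lambda>m. lam (Aset f) ^ omega g (2*m)) \<longlonglongrightarrow> 1"
proof -
  have "omega g (2*m) = 2^((aseq g m)^2 - 1)" for m by (simp add: omega_def)
  moreover have "(\<lambda>m. lam (Aset f) ^ 2^((aseq g m)^2 - 1)) \<longlonglongrightarrow> 1"
  proof (rule lam_limit[where a="aseq g"])
    show "filterlim (aseq g) at_top sequentially" by (rule aseq_lim)
    show "j\<^sup>2 \<le> (aseq g n)\<^sup>2 - 1" if "j < aseq g n" for j n using that by (rule sq_minus_one)
    show "\<forall>\<^sub>F n in sequentially. cis (2 * pi * (if aseq g n \<in> Aset f then 2 ^ ((aseq g n)\<^sup>2 - 1) * (1 / 2) ^ (aseq g n)\<^sup>2 else 0)) = 1"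
      using aseq_notin[OF assms] by (rule eventually_mono) simp
  qed auto
  ultimately show ?thesis by simp
qed

lemma lam_omega_even_eq: "(\<lambda>m. lam (Aset g) ^ omega g (2*m)) \<longlonglongrightarrow> -1"
proof -
  have "omega g (2*m) = 2^((aseq g m)^2 - 1)" for m by (simp add: omega_def)
  moreover have "(\<lambda>m. lam (Aset g) ^ 2^((aseq g m)^2 - 1)) \<longlonglongrightarrow> -1"
  proof (rule lam_limit[where a="aseq g"])
    show "filterlim (aseq g) at_top sequentially" by (rule aseq_lim)
    show "j\<^sup>2 \<le> (aseq g n)\<^sup>2 - 1" if "j < aseq g n" for j n using that by (rule sq_minus_one)
    show "\<forall>\<^sub>F n in sequentially. cis (2 * pi * (if aseq g n \<in> Aset g then 2 ^ ((aseq g n)\<^sup>2 - 1) * (1 / 2) ^ (aseq g n)\<^sup>2 else 0)) = -1"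
    proof (intro always_eventually allI)
      fix n
      let ?a = "aseq g n"
      have p: "?a^2 \<ge> 1" using aseq_pos[of g n] by simp
      have h: "(2::real) ^ (?a^2 - 1) * (1/2)^(?a^2) = 1/2"
      proof -
        have "(1/2::real)^(?a^2) = (1/2)^(?a^2 - 1) * (1/2)" using p
          by (metis power_Suc2 Suc_diff_1 less_le_trans zero_less_one)
        hence "(2::real) ^ (?a^2 - 1) * (1/2)^(?a^2) = ((2::real)^(?a^2 - 1) * (1/2)^(?a^2 - 1)) * (1/2)"
          by (simp only: mult.assoc)
        also have "\<dots> = 1/2" by (simp only: two_pow_half_pow mult_1_left)
        finally show ?thesis .
      qed
      have "cis (2 * pi * (if ?a \<in> Aset g then 2 ^ (?a^2 - 1) * (1 / 2) ^ (?a^2) else 0)) = cis (2 * pi * (1/2))"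
        by (simp only: if_P[OF aseq_in] h)
      also have "\<dots> = -1" by simp
      finally show "cis (2 * pi * (if ?a \<in> Aset g then 2 ^ (?a^2 - 1) * (1 / 2) ^ (?a^2) else 0)) = -1" .
    qed
  qed auto
  ultimately show ?thesis by simp
qed

lemma even_odd_tendsto:
  fixes X :: "nat \<Rightarrow> 'b::metric_space"
  assumes "(\<lambda>m. X (2*m)) \<longlonglongrightarrow> L" "(\<lambda>m. X (2*m+1)) \<longlonglongrightarrow> L"
  shows "X \<longlonglongrightarrow> L"
proof (rule tendstoI)
  fix e :: real assume e: "e > 0"
  from tendstoD[OF assms(1) e] obtain N1 where N1: "\<And>m. m \<ge> N1 \<Longrightarrow> dist (X (2*m)) L < e"
    by (auto simp: eventually_sequentially)
  from tendstoD[OF assms(2) e] obtain N2 where N2: "\<And>m. m \<ge> N2 \<Longrightarrow> dist (X (2*m+1)) L < e"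
    by (auto simp: eventually_sequentially)
  have "dist (X n) L < e" if "n \<ge> 2 * (N1 + N2)" for n
  proof (cases "even n")
    case True
    then obtain m where "n = 2*m" by blast
    thus ?thesis using N1[of m] that by simp
  next
    case False
    then obtain m where "n = 2*m+1" using oddE by blast
    thus ?thesis using N2[of m] that by simp
  qed
  thus "\<forall>\<^sub>F n in sequentially. dist (X n) L < e" by (auto simp: eventually_sequentially)
qed

lemma lam_omega_ne:
  assumes "f \<noteq> g" shows "(\<lambda>n. lam (Aset f) ^ omega g n) \<longlonglongrightarrow> 1"
  by (rule even_odd_tendsto[OF lam_omega_even_ne[OF assms] lam_omega_odd])


lemma infsum_split_finite:
  fixes f :: "'i \<Rightarrow> real"
  assumes "f summable_on D" "finite F" "F \<subseteq> D"
  shows "infsum f D = sum f F + infsum f (D - F)"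
proof -
  have "D = F \<union> (D - F)" using assms by auto
  hence "infsum f D = infsum f (F \<union> (D - F))" by simp
  also have "\<dots> = infsum f F + infsum f (D - F)"
    by (rule infsum_Un_disjoint) (use assms in \<open>auto intro: summable_on_subset\<close>)
  finally show ?thesis using assms by simp
qed

lemma dominated_infsum:
  fixes w :: "'i \<Rightarrow> real" and h :: "nat \<Rightarrow> 'i \<Rightarrow> real"
  assumes ws: "w summable_on D" and wpos: "\<And>p. p \<in> D \<Longrightarrow> 0 \<le> w p"
    and hb: "\<And>n p. p \<in> D \<Longrightarrow> 0 \<le> h n p \<and> h n p \<le> 4"
    and hl: "\<And>p. p \<in> D \<Longrightarrow> w p \<noteq> 0 \<Longrightarrow> (\<lambda>n. h n p) \<longlonglongrightarrow> 0"
  shows "(\<lambda>n. infsum (\<lambda>p. h n p * w p) D) \<longlonglongrightarrow> 0"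
proof (rule tendstoI)
  fix e :: real assume e: "e > 0"
  have hs: "(\<lambda>p. h n p * w p) summable_on D" for n
  proof (rule summable_on_comparison_test[where f="\<lambda>p. 4 * w p"])
    show "(\<lambda>p. 4 * w p) summable_on D" by (rule summable_on_cmult_right[OF ws])
  qed (use hb wpos in \<open>auto intro: mult_right_mono mult_nonneg_nonneg\<close>)
  obtain F where F: "finite F" "F \<subseteq> D" "dist (sum w F) (infsum w D) \<le> e/16"
    using infsum_finite_approximation[OF ws, of "e/16"] e by auto
  have tailw: "infsum w (D - F) \<le> e/16"
    using infsum_split_finite[OF ws F(1,2)] F(3) by (simp add: dist_real_def)
  define d where "d = e / (2 * (real (card F) + 1))"
  have d: "d > 0" using e by (simp add: d_def)
  have "\<forall>p\<in>F. \<forall>\<^sub>F n in sequentially. h n p * w p < d"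
  proof
    fix p assume "p \<in> F"
    hence pD: "p \<in> D" using F by auto
    show "\<forall>\<^sub>F n in sequentially. h n p * w p < d"
    proof (cases "w p = 0")
      case True thus ?thesis using d by simp
    next
      case False
      hence "(\<lambda>n. h n p * w p) \<longlonglongrightarrow> 0 * w p" by (intro tendsto_intros hl[OF pD])
      hence "(\<lambda>n. h n p * w p) \<longlonglongrightarrow> 0" by simp
      from tendstoD[OF this d] show ?thesis by (rule eventually_mono) (simp add: dist_real_def)
    qed
  qed
  hence "\<forall>\<^sub>F n in sequentially. \<forall>p\<in>F. h n p * w p < d" by (rule eventually_ball_finite[OF F(1)])
  thus "\<forall>\<^sub>F n in sequentially. dist (infsum (\<lambda>p. h n p * w p) D) 0 < e"
  proof (rule eventually_mono)
    fix n assume small: "\<forall>p\<in>F. h n p * w p < d"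
    have split: "infsum (\<lambda>p. h n p * w p) D = sum (\<lambda>p. h n p * w p) F + infsum (\<lambda>p. h n p * w p) (D - F)"
      by (rule infsum_split_finite[OF hs F(1,2)])
    have "sum (\<lambda>p. h n p * w p) F \<le> sum (\<lambda>p. d) F" by (rule sum_mono) (use small in auto)
    also have "\<dots> = real (card F) * d" by simp
    also have "\<dots> < e/2" using e by (simp add: d_def field_simps)
    finally have s1: "sum (\<lambda>p. h n p * w p) F < e/2" .
    have "infsum (\<lambda>p. h n p * w p) (D - F) \<le> infsum (\<lambda>p. 4 * w p) (D - F)"
      by (rule infsum_mono) (use hs ws hb wpos in \<open>auto intro: summable_on_subset summable_on_cmult_right mult_right_mono\<close>)
    also have "\<dots> = 4 * infsum w (D - F)" by (rule infsum_cmult_right) (use ws in \<open>auto intro: summable_on_subset\<close>)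
    also have "\<dots> \<le> e/4" using tailw by simp
    finally have s2: "infsum (\<lambda>p. h n p * w p) (D - F) \<le> e/4" .
    have nn: "0 \<le> infsum (\<lambda>p. h n p * w p) D" by (rule infsum_nonneg) (use hb wpos in auto)
    show "dist (infsum (\<lambda>p. h n p * w p) D) 0 < e" using split s1 s2 nn e by (simp add: dist_real_def)
  qed
qed


definition Dg :: "'i set \<Rightarrow> ('i \<Rightarrow> 'a::complex_inner) \<Rightarrow> ('i \<Rightarrow> complex) \<Rightarrow> 'a \<Rightarrow> 'a" where
  "Dg D v \<mu> x = infsum (\<lambda>p. scaleC (\<mu> p * cinner (v p) x) (v p)) D"

lemma Dg_sq_summable:
  assumes ov: "orthon D v" and B: "\<And>p. cmod (\<mu> p) \<le> B"
  shows "(\<lambda>p. (cmod (\<mu> p * cinner (v p) x))^2) summable_on D"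
proof (rule summable_on_comparison_test[where f="\<lambda>p. B^2 * (cmod (cinner (v p) x))^2"])
  show "(\<lambda>p. B^2 * (cmod (cinner (v p) x))^2) summable_on D"
    by (rule summable_on_cmult_right[OF orthon_bessel(1)[OF ov]])
  show "(cmod (\<mu> p * cinner (v p) x))^2 \<le> B^2 * (cmod (cinner (v p) x))^2" for p
  proof -
    have "cmod (\<mu> p) ^2 \<le> B^2" using B[of p] by (rule power_mono) simp
    thus ?thesis by (simp add: norm_mult power_mult_distrib mult_right_mono)
  qed
qed simp

lemma Dg_summable:
  fixes v :: "'i \<Rightarrow> 'a::{complex_inner, complete_space}"
  assumes ov: "orthon D v" and B: "\<And>p. cmod (\<mu> p) \<le> B"
  shows "(\<lambda>p. scaleC (\<mu> p * cinner (v p) x) (v p)) summable_on D"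
  by (rule orthon_summable[OF ov Dg_sq_summable[OF ov B]])

lemma Dg_coef:
  fixes v :: "'i \<Rightarrow> 'a::{complex_inner, complete_space}"
  assumes ov: "orthon D v" and B: "\<And>p. cmod (\<mu> p) \<le> B" and q: "q \<in> D"
  shows "cinner (v q) (Dg D v \<mu> x) = \<mu> q * cinner (v q) x"
  unfolding Dg_def by (rule orthon_coef[OF ov Dg_sq_summable[OF ov B] q])

lemma Dg_add_fun:
  fixes v :: "'i \<Rightarrow> 'a::{complex_inner, complete_space}"
  assumes ov: "orthon D v" and B: "\<And>p. cmod (\<mu> p) \<le> B" and B': "\<And>p. cmod (\<nu> p) \<le> B'"
  shows "Dg D v \<mu> x + Dg D v \<nu> x = Dg D v (\<lambda>p. \<mu> p + \<nu> p) x"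
  unfolding Dg_def
  by (subst infsum_add[symmetric]) (auto intro!: Dg_summable[OF ov B] Dg_summable[OF ov B'] infsum_cong
        simp: scaleC_add_left distrib_right)

lemma Dg_cong:
  assumes "\<And>p. p \<in> D \<Longrightarrow> \<mu> p * cinner (v p) y = \<nu> p * cinner (v p) x"
  shows "Dg D v \<mu> y = Dg D v \<nu> x"
  unfolding Dg_def by (rule infsum_cong) (simp add: assms)

lemma Dg_zero: "Dg D v (\<lambda>p. 0) x = 0"
  unfolding Dg_def by simp

lemma Dg_norm_sq:
  fixes v :: "'i \<Rightarrow> 'a::{complex_inner, complete_space}"
  assumes ov: "orthon D v" and B: "\<And>p. cmod (\<mu> p) \<le> B"
  shows "(norm (Dg D v \<mu> x))^2 \<le> infsum (\<lambda>p. (cmod (\<mu> p * cinner (v p) x))^2) D"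
  unfolding Dg_def by (rule orthon_norm_le[OF ov Dg_sq_summable[OF ov B]])

lemma Dg_norm:
  fixes v :: "'i \<Rightarrow> 'a::{complex_inner, complete_space}"
  assumes ov: "orthon D v" and B: "\<And>p. cmod (\<mu> p) \<le> B"
  shows "norm (Dg D v \<mu> x) \<le> B * norm x"
proof -
  have B0: "B \<ge> 0" using B[of undefined] norm_ge_zero order_trans by blast
  have "(norm (Dg D v \<mu> x))^2 \<le> infsum (\<lambda>p. (cmod (\<mu> p * cinner (v p) x))^2) D"
    by (rule Dg_norm_sq[OF ov B])
  also have "\<dots> \<le> infsum (\<lambda>p. B^2 * (cmod (cinner (v p) x))^2) D"
  proof (rule infsum_mono)
    show "(\<lambda>p. (cmod (\<mu> p * cinner (v p) x))^2) summable_on D" by (rule Dg_sq_summable[OF ov B])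
    show "(\<lambda>p. B^2 * (cmod (cinner (v p) x))^2) summable_on D"
      by (rule summable_on_cmult_right[OF orthon_bessel(1)[OF ov]])
    show "(cmod (\<mu> p * cinner (v p) x))^2 \<le> B^2 * (cmod (cinner (v p) x))^2" for p
    proof -
      have "cmod (\<mu> p) ^2 \<le> B^2" using B[of p] by (rule power_mono) simp
      thus ?thesis by (simp add: norm_mult power_mult_distrib mult_right_mono)
    qed
  qed
  also have "\<dots> = B^2 * infsum (\<lambda>p. (cmod (cinner (v p) x))^2) D"
    by (rule infsum_cmult_right) (rule orthon_bessel(1)[OF ov])
  also have "\<dots> \<le> B^2 * (norm x)^2"
    by (rule mult_left_mono[OF orthon_bessel(2)[OF ov]]) simp
  also have "\<dots> = (B * norm x)^2" by (simp add: power_mult_distrib)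
  finally show ?thesis using B0 by (simp add: power2_le_iff_abs_le)
qed

lemma Dg_add:
  fixes v :: "'i \<Rightarrow> 'a::{complex_inner, complete_space}"
  assumes ov: "orthon D v" and B: "\<And>p. cmod (\<mu> p) \<le> B"
  shows "Dg D v \<mu> (x + y) = Dg D v \<mu> x + Dg D v \<mu> y"
  unfolding Dg_def
  by (subst infsum_add[symmetric]) (auto intro!: Dg_summable[OF ov B] infsum_cong
        simp: scaleC_add_left distrib_left cinner_add_right)

lemma Dg_scaleC:
  fixes v :: "'i \<Rightarrow> 'a::{complex_inner, complete_space}"
  assumes ov: "orthon D v" and B: "\<And>p. cmod (\<mu> p) \<le> B"
  shows "Dg D v \<mu> (scaleC c x) = scaleC c (Dg D v \<mu> x)"
proof -
  have "((\<lambda>p. scaleC c (scaleC (\<mu> p * cinner (v p) x) (v p))) has_sum scaleC c (Dg D v \<mu> x)) D"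
    unfolding Dg_def by (rule has_sum_bounded_linear[OF bounded_linear_scaleC has_sum_infsum[OF Dg_summable[OF ov B]]])
  moreover have "scaleC c (scaleC (\<mu> p * cinner (v p) x) (v p)) = scaleC (\<mu> p * cinner (v p) (scaleC c x)) (v p)" for p
    by (simp add: scaleC_scaleC cinner_scaleC_right mult_ac)
  ultimately have "((\<lambda>p. scaleC (\<mu> p * cinner (v p) (scaleC c x)) (v p)) has_sum scaleC c (Dg D v \<mu> x)) D"
    by simp
  thus ?thesis unfolding Dg_def by (rule infsumI)
qed


lemma cmod_lam: "cmod (lam A) = 1" by (simp add: lam_def)

lemma cmod_lam_pow_minus: "cmod (lam A ^ n - 1) \<le> 2"
proof -
  have "cmod (lam A ^ n - 1) \<le> cmod (lam A ^ n) + cmod 1" by (rule norm_triangle_ineq4)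
  thus ?thesis by (simp add: norm_power cmod_lam)
qed

lemma cmod_lam_mixed: "cmod ((lam A - 1) * lam A ^ n) \<le> 2"
  using cmod_lam_pow_minus[of A 1] by (simp add: norm_mult norm_power cmod_lam)

definition Top :: "(nat \<Rightarrow> bool) set \<Rightarrow> ((nat \<Rightarrow> bool) \<Rightarrow> 'a::complex_inner) \<Rightarrow> 'a \<Rightarrow> 'a" where
  "Top D v x = x + Dg D v (\<lambda>p. lam (Aset p) - 1) x"

lemma Top_pow:
  fixes v :: "(nat \<Rightarrow> bool) \<Rightarrow> 'a::{complex_inner, complete_space}"
  assumes ov: "orthon D v"
  shows "(Top D v ^^ n) x = x + Dg D v (\<lambda>p. lam (Aset p) ^ n - 1) x"
proof (induction n)
  case 0 thus ?case by (simp add: Dg_zero)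
next
  case (Suc n)
  define y where "y = (Top D v ^^ n) x"
  have cy: "cinner (v p) y = lam (Aset p) ^ n * cinner (v p) x" if "p \<in> D" for p
    unfolding y_def Suc.IH cinner_add_right
    by (simp add: Dg_coef[OF ov cmod_lam_pow_minus that] algebra_simps)
  have "(Top D v ^^ Suc n) x = y + Dg D v (\<lambda>p. lam (Aset p) - 1) y" by (simp add: y_def Top_def)
  also have "Dg D v (\<lambda>p. lam (Aset p) - 1) y = Dg D v (\<lambda>p. (lam (Aset p) - 1) * lam (Aset p) ^ n) x"
    by (rule Dg_cong) (simp add: cy)
  also have "y = x + Dg D v (\<lambda>p. lam (Aset p) ^ n - 1) x" by (simp add: y_def Suc.IH)
  also have "x + Dg D v (\<lambda>p. lam (Aset p) ^ n - 1) x + Dg D v (\<lambda>p. (lam (Aset p) - 1) * lam (Aset p) ^ n) x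
      = x + Dg D v (\<lambda>p. (lam (Aset p) ^ n - 1) + (lam (Aset p) - 1) * lam (Aset p) ^ n) x"
    by (simp add: add.assoc Dg_add_fun[OF ov cmod_lam_pow_minus cmod_lam_mixed])
  also have "Dg D v (\<lambda>p. (lam (Aset p) ^ n - 1) + (lam (Aset p) - 1) * lam (Aset p) ^ n) x
      = Dg D v (\<lambda>p. lam (Aset p) ^ Suc n - 1) x"
    by (rule Dg_cong) (simp add: algebra_simps)
  finally show ?case .
qed

lemma Top_bclinear:
  fixes v :: "(nat \<Rightarrow> bool) \<Rightarrow> 'a::{complex_inner, complete_space}"
  assumes ov: "orthon D v"
  shows "bounded_clinear_op (Top D v)"
proof -
  have B: "\<And>p. cmod (lam (Aset p) - 1) \<le> 2" using cmod_lam_pow_minus[of _ 1] by simp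
  have sc: "Top D v (scaleC c x) = scaleC c (Top D v x)" for c x
    by (simp add: Top_def Dg_scaleC[OF ov B] scaleC_add_right)
  have "bounded_linear (Top D v)"
  proof (rule bounded_linear_intro[where K=3])
    show "Top D v (x + y) = Top D v x + Top D v y" for x y
      by (simp add: Top_def Dg_add[OF ov B] algebra_simps)
    show "Top D v (r *\<^sub>R x) = r *\<^sub>R Top D v x" for r x
      using sc[of "complex_of_real r" x] by (simp add: scaleC_of_real)
    show "norm (Top D v x) \<le> norm x * 3" for x
    proof -
      have "norm (Top D v x) \<le> norm x + norm (Dg D v (\<lambda>p. lam (Aset p) - 1) x)"
        unfolding Top_def by (rule norm_triangle_ineq)
      also have "\<dots> \<le> norm x + 2 * norm x" using Dg_norm[OF ov B] by simp
      finally show ?thesis by simp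
    qed
  qed
  thus ?thesis using sc by (simp add: bounded_clinear_op_def)
qed

lemma Top_rec:
  fixes v :: "(nat \<Rightarrow> bool) \<Rightarrow> 'a::{complex_inner, complete_space}"
  assumes ov: "orthon D v"
    and lim: "\<And>p. p \<in> D \<Longrightarrow> cinner (v p) x \<noteq> 0 \<Longrightarrow> (\<lambda>n. lam (Aset p) ^ \<omega> n) \<longlonglongrightarrow> 1"
  shows "(\<lambda>n. (Top D v ^^ \<omega> n) x) \<longlonglongrightarrow> x"
proof -
  define w where "w p = (cmod (cinner (v p) x))^2" for p
  define h where "h n p = (cmod (lam (Aset p) ^ \<omega> n - 1))^2" for n p
  have s0: "(\<lambda>n. infsum (\<lambda>p. h n p * w p) D) \<longlonglongrightarrow> 0"
  proof (rule dominated_infsum)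
    show "w summable_on D" unfolding w_def by (rule orthon_bessel(1)[OF ov])
    show "0 \<le> w p" for p by (simp add: w_def)
    show "0 \<le> h n p \<and> h n p \<le> 4" for n p
    proof -
      have "(cmod (lam (Aset p) ^ \<omega> n - 1))^2 \<le> 2^2" by (rule power_mono[OF cmod_lam_pow_minus]) simp
      thus ?thesis by (simp add: h_def)
    qed
    show "(\<lambda>n. h n p) \<longlonglongrightarrow> 0" if "p \<in> D" "w p \<noteq> 0" for p
    proof -
      have "cinner (v p) x \<noteq> 0" using that by (simp add: w_def)
      hence "(\<lambda>n. lam (Aset p) ^ \<omega> n - 1) \<longlonglongrightarrow> 1 - 1" by (rule tendsto_diff[OF lim[OF that(1)] tendsto_const])
      hence "(\<lambda>n. (cmod (lam (Aset p) ^ \<omega> n - 1))^2) \<longlonglongrightarrow> (cmod (1 - 1::complex))^2" by (rule tendsto_power[OF tendsto_norm])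
      thus ?thesis by (simp add: h_def)
    qed
  qed
  have B: "\<And>p. cmod (lam (Aset p) ^ m - 1) \<le> 2" for m by (rule cmod_lam_pow_minus)
  have le: "norm ((Top D v ^^ \<omega> n) x - x) \<le> sqrt (infsum (\<lambda>p. h n p * w p) D)" for n
  proof -
    have "(norm ((Top D v ^^ \<omega> n) x - x))^2 = (norm (Dg D v (\<lambda>p. lam (Aset p) ^ \<omega> n - 1) x))^2"
      by (simp add: Top_pow[OF ov])
    also have "\<dots> \<le> infsum (\<lambda>p. (cmod ((lam (Aset p) ^ \<omega> n - 1) * cinner (v p) x))^2) D"
      by (rule Dg_norm_sq[OF ov B])
    also have "\<dots> = infsum (\<lambda>p. h n p * w p) D"
      by (simp add: h_def w_def norm_mult power_mult_distrib)
    finally show ?thesis by (rule real_le_rsqrt)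
  qed
  have "(\<lambda>n. sqrt (infsum (\<lambda>p. h n p * w p) D)) \<longlonglongrightarrow> sqrt 0" by (intro tendsto_intros s0)
  have "(\<lambda>n. norm ((Top D v ^^ \<omega> n) x - x)) \<longlonglongrightarrow> 0"
  proof (rule tendsto_sandwich[where f="\<lambda>_. 0" and h="\<lambda>n. sqrt (infsum (\<lambda>p. h n p * w p) D)"])
    show "\<forall>\<^sub>F n in sequentially. (0::real) \<le> norm ((Top D v ^^ \<omega> n) x - x)" by simp
    show "\<forall>\<^sub>F n in sequentially. norm ((Top D v ^^ \<omega> n) x - x) \<le> sqrt (infsum (\<lambda>p. h n p * w p) D)"
      by (rule always_eventually) (simp add: le)
    show "((\<lambda>n. 0::real) \<longlongrightarrow> 0) sequentially" by simp
  qed (use \<open>(\<lambda>n. sqrt (infsum (\<lambda>p. h n p * w p) D)) \<longlonglongrightarrow> sqrt 0\<close> in simp)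
  hence "(\<lambda>n. (Top D v ^^ \<omega> n) x - x) \<longlonglongrightarrow> 0" by (simp add: tendsto_norm_zero_iff)
  thus ?thesis by (simp add: LIM_zero_iff)
qed

lemma Top_coef_lim:
  fixes v :: "(nat \<Rightarrow> bool) \<Rightarrow> 'a::{complex_inner, complete_space}"
  assumes ov: "orthon D v" and q: "q \<in> D" and y: "(\<lambda>n. (Top D v ^^ \<omega> n) y) \<longlonglongrightarrow> y"
  shows "(\<lambda>n. lam (Aset q) ^ \<omega> n * cinner (v q) y) \<longlonglongrightarrow> cinner (v q) y"
proof -
  have "(\<lambda>n. cinner (v q) ((Top D v ^^ \<omega> n) y)) \<longlonglongrightarrow> cinner (v q) y"
    by (rule bounded_linear.tendsto[OF bounded_linear_cinner_right y])
  moreover have "cinner (v q) ((Top D v ^^ m) y) = lam (Aset q) ^ m * cinner (v q) y" for m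
  proof -
    have "cinner (v q) ((Top D v ^^ m) y) = cinner (v q) y + (lam (Aset q) ^ m - 1) * cinner (v q) y"
      by (simp only: Top_pow[OF ov] cinner_add_right Dg_coef[OF ov cmod_lam_pow_minus q])
    thus ?thesis by (simp add: algebra_simps)
  qed
  ultimately show ?thesis by simp
qed


theorem proposition4p7:
  assumes "\<not> separable_space (euclidean :: ('a::{complex_inner, complete_space}) topology)"
  shows "\<exists>T :: 'a \<Rightarrow> 'a. bounded_clinear_op T \<and> rigid T \<and> St T = {}"
proof -
  obtain D and v :: "(nat \<Rightarrow> bool) \<Rightarrow> 'a" where ov: "orthon D v" and uD: "uncountable D"
    using exists_uncountable_orthon[OF assms] by blast
  define T where "T = Top D v"
  have vv: "cinner (v p) (v p) = 1" if "p \<in> D" for p using ov that by (simp add: orthon_def)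
  have vnz: "v p \<noteq> 0" if "p \<in> D" for p using vv[OF that] by auto
  have vcoef: "cinner (v q) (v p) \<noteq> 0 \<Longrightarrow> q = p" if "p \<in> D" "q \<in> D" for p q
    using ov that by (auto simp: orthon_def split: if_splits)
  obtain p0 where p0: "p0 \<in> D" using uD by (metis countable_empty ex_in_conv)
  have bc: "bounded_clinear_op T" unfolding T_def by (rule Top_bclinear[OF ov])
  have rhoL: "recL T rho = UNIV"
  proof -
    have "x \<in> recL T rho" for x
      unfolding recL_def mem_Collect_eq T_def by (rule Top_rec[OF ov lam_rho])
    thus ?thesis by auto
  qed
  have rho_C: "rho \<in> recC T"
    unfolding recC_def using rho_mono rhoL vnz[OF p0] by (auto simp: rho_def recL_def)
  have rig: "rigid T" unfolding rigid_def using rho_C rhoL by blast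
  have "St T = {}"
  proof (rule ccontr)
    assume "St T \<noteq> {}"
    then obtain x where xS: "x \<in> St T" by blast
    define S where "S = {p\<in>D. (cmod (cinner (v p) x))^2 \<noteq> 0}"
    have cS: "countable S" unfolding S_def by (rule summable_countable_real[OF orthon_bessel(1)[OF ov]])
    have "\<not> D \<subseteq> S" using cS uD countable_subset by blast
    then obtain g where gD: "g \<in> D" and gS: "g \<notin> S" by blast
    have gx: "cinner (v g) x = 0" using gS gD by (simp add: S_def)
    have "\<not> D \<subseteq> {g}" using uD countable_subset by (metis countable_empty countable_insert)
    then obtain h where hD: "h \<in> D" and hg: "h \<noteq> g" by blast
    define \<omega> where "\<omega> = omega g"
    have memL: "y \<in> recL T \<omega>" if "\<And>p. p \<in> D \<Longrightarrow> cinner (v p) y \<noteq> 0 \<Longrightarrow> p \<noteq> g" for y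
      unfolding recL_def mem_Collect_eq T_def \<omega>_def
      by (rule Top_rec[OF ov lam_omega_ne]) (use that in blast)
    have xL: "x \<in> recL T \<omega>" by (rule memL) (use gx in blast)
    have hL: "v h \<in> recL T \<omega>" by (rule memL) (use vcoef[OF hD] hg in blast)
    have wC: "\<omega> \<in> recC T"
      unfolding recC_def using omega_mono omega_pos hL vnz[OF hD] by (auto simp: \<omega>_def recL_def)
    have st: "stationary T \<omega>" using xS xL wC by (auto simp: St_def)
    define r :: "nat \<Rightarrow> nat" where "r n = 2 * n + 1" for n
    have rm: "strict_mono r" by (rule strict_monoI_Suc) (simp add: r_def)
    have "recL T (\<omega> \<circ> r) = UNIV"
    proof -
      have "y \<in> recL T (\<omega> \<circ> r)" for y
        unfolding recL_def mem_Collect_eq T_def \<omega>_def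
        by (rule Top_rec[OF ov]) (use lam_omega_odd in \<open>simp add: r_def\<close>)
      thus ?thesis by auto
    qed
    hence "closure (recL T \<omega>) = UNIV" using st rm by (auto simp: stationary_def)
    moreover have "recL T \<omega> \<subseteq> {y. cinner (v g) y = 0}"
    proof
      fix y assume "y \<in> recL T \<omega>"
      hence yl: "(\<lambda>n. (Top D v ^^ \<omega> n) y) \<longlonglongrightarrow> y" by (simp add: recL_def T_def)
      let ?c = "cinner (v g) y"
      have l1: "(\<lambda>n. lam (Aset g) ^ \<omega> n * ?c) \<longlonglongrightarrow> ?c" by (rule Top_coef_lim[OF ov gD yl])
      have "((\<lambda>n. lam (Aset g) ^ \<omega> n * ?c) \<circ> (\<lambda>m. 2 * m)) \<longlonglongrightarrow> ?c"
        by (rule LIMSEQ_subseq_LIMSEQ[OF l1]) (simp add: strict_mono_def)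
      hence l2: "(\<lambda>m. lam (Aset g) ^ omega g (2 * m) * ?c) \<longlonglongrightarrow> ?c" by (simp add: \<omega>_def o_def)
      have l3: "(\<lambda>m. lam (Aset g) ^ omega g (2 * m) * ?c) \<longlonglongrightarrow> -1 * ?c"
        by (rule tendsto_mult[OF lam_omega_even_eq tendsto_const])
      have "?c = -1 * ?c" using LIMSEQ_unique[OF l2 l3] .
      hence "?c = 0" by simp
      thus "y \<in> {y. cinner (v g) y = 0}" by simp
    qed
    moreover have "closed {y. cinner (v g) y = 0}"
      by (rule closed_Collect_eq) (auto intro: linear_continuous_on bounded_linear_cinner_right)
    ultimately have "UNIV \<subseteq> {y. cinner (v g) y = 0}" by (metis closure_minimal)
    hence "cinner (v g) (v g) = 0" by blast
    thus False using vv[OF gD] by simp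
  qed
  thus ?thesis using bc rig by blast
qed


end
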